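(* Let $M$ be an end-decisive MM-QFA that accepts $L$ with bounded error, and let $M'$ be an end-decisive MM-QFA that accepts $L'$ with bounded positive one-sided error. Then there exists an MM-QFA $M''$ that accepts $L\cap L'$ with bounded error.
   Context: A measure-many quantum finite automaton (MM-QFA) over $\Sigma$ is a tuple $(Q,\Sigma,\{U_\sigma\}_{\sigma\in\Sigma\cup\{\$\}},q_0,Q_{acc},Q_{rej})$ with $Q$ finite indexing an orthonormal basis of $\mathbb{C}^Q$, end-marker $\$\notin\Sigma$, unitary $U_\sigma$, initial state $q_0$, and $Q$ partitioned into $Q_{acc},Q_{rej},Q_{non}$ with orthogonal projections $P_{acc},P_{rej},P_{non}$. On input $x$ it processes $x\$$ maintaining $(\psi,p_{acc},p_{rej})$, initially $(|q_0\rangle,0,0)$; on reading $\sigma$: $\psi'=U_\sigma\psi$, $p_{acc}\mathrel{+}=\|P_{acc}\psi'\|^2$, $p_{rej}\mathrel{+}=\|P_{rej}\psi'\|^2$, $\psi\leftarrow P_{non}\psi'$; the acceptance probability $p(x)$ is the final $p_{acc}$. It is end-decisive if $P_{acc}\psi'=0$ after reading every non-end-marker symbol, on every input. It accepts $K$ with bounded error if for some $\lambda$ and $\epsilon>0$, $p(x)>\lambda+\epsilon$ for $x\in K$ and $p(x)<\lambda-\epsilon$ for $x\notin K$; it accepts $K$ with bounded positive one-sided error if there is $c>0$ with $p(x)>c$ for $x\in K$ and $p(x)=0$ for $x\notin K$. *)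

theory Defs
  imports Complex_Main "Jordan_Normal_Form.Matrix"
begin

text \<open>An MM-QFA over the alphabet given by the type 'a. The state set Q is {0..<qdim M},
  indexing the standard orthonormal basis of C^Q. The input symbols are Some s (s :: 'a),
  the end-marker is None.\<close>

record 'a mmqfa =
  qdim :: nat
  trans :: "'a option \<Rightarrow> complex mat"
  q0 :: nat
  qacc :: "nat set"
  qrej :: "nat set"

definition qnon :: "'a mmqfa \<Rightarrow> nat set" where
  "qnon M = {0..<qdim M} - qacc M - qrej M"

definition mat_unitary :: "nat \<Rightarrow> complex mat \<Rightarrow> bool" where
  "mat_unitary n U \<longleftrightarrow> U \<in> carrier_mat n n \<and>
     U * mat n n (\<lambda>(i,j). cnj (U $$ (j,i))) = 1\<^sub>m n \<and>
     mat n n (\<lambda>(i,j). cnj (U $$ (j,i))) * U = 1\<^sub>m n"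

definition valid_mmqfa :: "'a mmqfa \<Rightarrow> bool" where
  "valid_mmqfa M \<longleftrightarrow> q0 M < qdim M \<and> qacc M \<subseteq> {0..<qdim M} \<and> qrej M \<subseteq> {0..<qdim M}
     \<and> qacc M \<inter> qrej M = {} \<and> (\<forall>s. mat_unitary (qdim M) (trans M s))"

definition proj_on :: "nat set \<Rightarrow> complex vec \<Rightarrow> complex vec" where
  "proj_on S v = vec (dim_vec v) (\<lambda>i. if i \<in> S then v $ i else 0)"

definition proj_sqnorm :: "nat set \<Rightarrow> complex vec \<Rightarrow> real" where
  "proj_sqnorm S v = (\<Sum>i\<in>{0..<dim_vec v} \<inter> S. (cmod (v $ i))\<^sup>2)"

definition mm_step :: "'a mmqfa \<Rightarrow> 'a option \<Rightarrow> complex vec \<times> real \<times> real \<Rightarrow> complex vec \<times> real \<times> real" where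
  "mm_step M s c = (case c of (\<psi>, pa, pr) \<Rightarrow>
     (let \<psi>' = trans M s *\<^sub>v \<psi> in
       (proj_on (qnon M) \<psi>', pa + proj_sqnorm (qacc M) \<psi>', pr + proj_sqnorm (qrej M) \<psi>')))"

definition mm_run :: "'a mmqfa \<Rightarrow> 'a option list \<Rightarrow> complex vec \<times> real \<times> real" where
  "mm_run M w = fold (mm_step M) w (unit_vec (qdim M) (q0 M), 0, 0)"

definition acc_prob :: "'a mmqfa \<Rightarrow> 'a list \<Rightarrow> real" where
  "acc_prob M x = fst (snd (mm_run M (map Some x @ [None])))"

definition end_decisive :: "'a mmqfa \<Rightarrow> bool" where
  "end_decisive M \<longleftrightarrow> (\<forall>x s. proj_on (qacc M) (trans M (Some s) *\<^sub>v fst (mm_run M (map Some x)))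
       = 0\<^sub>v (qdim M))"

definition accepts_bounded_error :: "'a mmqfa \<Rightarrow> 'a list set \<Rightarrow> bool" where
  "accepts_bounded_error M K \<longleftrightarrow> (\<exists>thr \<epsilon>::real. \<epsilon> > 0 \<and>
     (\<forall>x. (x \<in> K \<longrightarrow> acc_prob M x > thr + \<epsilon>) \<and> (x \<notin> K \<longrightarrow> acc_prob M x < thr - \<epsilon>)))"

definition accepts_one_sided :: "'a mmqfa \<Rightarrow> 'a list set \<Rightarrow> bool" where
  "accepts_one_sided M K \<longleftrightarrow> (\<exists>c::real. c > 0 \<and>
     (\<forall>x. (x \<in> K \<longrightarrow> acc_prob M x > c) \<and> (x \<notin> K \<longrightarrow> acc_prob M x = 0)))"

end

theory Submission
  imports Defs
begin

lemma sum_split: "(\<Sum>k\<in>{0..<n*m}. f k) = (\<Sum>i\<in>{0..<n}. \<Sum>j\<in>{0..<m}. f (i*m+j::nat))"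
proof -
  have "(\<Sum>k\<in>{0..<n*m}. f k) = (\<Sum>i<n. sum f {i * m..<i * m + m})"
    by (simp add: sum.nat_group atLeast0LessThan)
  also have "\<dots> = (\<Sum>i<n. \<Sum>j\<in>{0..<m}. f (i*m+j))"
  proof (rule sum.cong[OF refl])
    fix i show "sum f {i * m..<i * m + m} = (\<Sum>j\<in>{0..<m}. f (i*m+j))"
      using sum.shift_bounds_nat_ivl[of f 0 "i*m" m] by (simp add: add.commute)
  qed
  finally show ?thesis by (simp add: atLeast0LessThan)
qed

lemma divmod_simps: "j < (m::nat) \<Longrightarrow> (i*m+j) div m = i" "j < (m::nat) \<Longrightarrow> (i*m+j) mod m = j"
  by auto

definition kv :: "complex vec \<Rightarrow> complex vec \<Rightarrow> complex vec" where
  "kv a b = vec (dim_vec a * dim_vec b) (\<lambda>k. a $ (k div dim_vec b) * b $ (k mod dim_vec b))"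

definition km :: "complex mat \<Rightarrow> complex mat \<Rightarrow> complex mat" where
  "km A B = mat (dim_row A * dim_row B) (dim_col A * dim_col B)
     (\<lambda>(r,c). A $$ (r div dim_row B, c div dim_col B) * B $$ (r mod dim_row B, c mod dim_col B))"

lemma dim_kv[simp]: "dim_vec (kv a b) = dim_vec a * dim_vec b" by (simp add: kv_def)
lemma dim_km[simp]: "dim_row (km A B) = dim_row A * dim_row B" "dim_col (km A B) = dim_col A * dim_col B"
  by (simp_all add: km_def)

lemma lt_mult_div: "r < a * (b::nat) \<Longrightarrow> r div b < a"
  by (simp add: less_mult_imp_div_less)
lemma lt_mult_mod: "r < a * (b::nat) \<Longrightarrow> r mod b < b"
  by (metis mod_less_divisor mult_0_right not_less_zero gr0I)

lemma km_mult_kv: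
  assumes "dim_col A = dim_vec a" "dim_col B = dim_vec b"
  shows "km A B *\<^sub>v kv a b = kv (A *\<^sub>v a) (B *\<^sub>v b)"
proof (rule eq_vecI)
  show "dim_vec (km A B *\<^sub>v kv a b) = dim_vec (kv (A *\<^sub>v a) (B *\<^sub>v b))" by simp
  fix r assume r: "r < dim_vec (kv (A *\<^sub>v a) (B *\<^sub>v b))"
  hence r': "r < dim_row A * dim_row B" by simp
  have d: "r div dim_row B < dim_row A" "r mod dim_row B < dim_row B"
    using lt_mult_div[OF r'] lt_mult_mod[OF r'] .
  have "(km A B *\<^sub>v kv a b) $ r = (\<Sum>k\<in>{0..<dim_col A * dim_col B}.
     A $$ (r div dim_row B, k div dim_col B) * B $$ (r mod dim_row B, k mod dim_col B) *
     (a $ (k div dim_col B) * b $ (k mod dim_col B)))"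
    using r' assms by (auto simp: scalar_prod_def km_def kv_def intro!: sum.cong
        dest: lt_mult_div lt_mult_mod)
  also have "\<dots> = (\<Sum>i\<in>{0..<dim_col A}. \<Sum>j\<in>{0..<dim_col B}.
     (A $$ (r div dim_row B, i) * a $ i) * (B $$ (r mod dim_row B, j) * b $ j))"
    by (simp add: sum_split mult_ac)
  also have "\<dots> = (A *\<^sub>v a) $ (r div dim_row B) * (B *\<^sub>v b) $ (r mod dim_row B)"
    using d assms by (simp add: scalar_prod_def sum_product)
  also have "\<dots> = kv (A *\<^sub>v a) (B *\<^sub>v b) $ r" using r' by (simp add: kv_def)
  finally show "(km A B *\<^sub>v kv a b) $ r = kv (A *\<^sub>v a) (B *\<^sub>v b) $ r" .
qed

lemma km_mult:
  assumes "dim_col A = dim_row C" "dim_col B = dim_row D"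
  shows "km A B * km C D = km (A * C) (B * D)"
proof (rule eq_matI)
  fix r c assume r: "r < dim_row (km (A * C) (B * D))" and c: "c < dim_col (km (A * C) (B * D))"
  hence r': "r < dim_row A * dim_row B" and c': "c < dim_col C * dim_col D" by auto
  have d: "r div dim_row B < dim_row A" "r mod dim_row B < dim_row B"
    using lt_mult_div[OF r'] lt_mult_mod[OF r'] .
  have e: "c div dim_col D < dim_col C" "c mod dim_col D < dim_col D"
    using lt_mult_div[OF c'] lt_mult_mod[OF c'] .
  have "(km A B * km C D) $$ (r, c) = (\<Sum>k\<in>{0..<dim_col A * dim_col B}.
     A $$ (r div dim_row B, k div dim_col B) * B $$ (r mod dim_row B, k mod dim_col B) *
     (C $$ (k div dim_row D, c div dim_col D) * D $$ (k mod dim_row D, c mod dim_col D)))"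
    using r' c' assms by (auto simp: scalar_prod_def km_def intro!: sum.cong
        dest: lt_mult_div lt_mult_mod)
  also have "\<dots> = (\<Sum>i\<in>{0..<dim_col A}. \<Sum>j\<in>{0..<dim_col B}.
     (A $$ (r div dim_row B, i) * C $$ (i, c div dim_col D)) * (B $$ (r mod dim_row B, j) * D $$ (j, c mod dim_col D)))"
    using assms by (simp add: sum_split mult_ac)
  also have "\<dots> = (A * C) $$ (r div dim_row B, c div dim_col D) * (B * D) $$ (r mod dim_row B, c mod dim_col D)"
    using d e assms by (simp add: scalar_prod_def sum_product)
  also have "\<dots> = km (A * C) (B * D) $$ (r, c)" using r' c' by (simp add: km_def)
  finally show "(km A B * km C D) $$ (r, c) = km (A * C) (B * D) $$ (r, c)" .
qed auto

definition adj :: "nat \<Rightarrow> complex mat \<Rightarrow> complex mat" where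
  "adj n U = mat n n (\<lambda>(i,j). cnj (U $$ (j,i)))"

lemma adj_km:
  assumes "A \<in> carrier_mat n n" "B \<in> carrier_mat m m"
  shows "adj (n*m) (km A B) = km (adj n A) (adj m B)"
proof (rule eq_matI)
  fix i j assume "i < dim_row (km (adj n A) (adj m B))" "j < dim_col (km (adj n A) (adj m B))"
  hence i: "i < n*m" and j: "j < n*m" using assms by (auto simp: adj_def)
  note b = lt_mult_div[OF i] lt_mult_mod[OF i] lt_mult_div[OF j] lt_mult_mod[OF j]
  show "adj (n * m) (km A B) $$ (i, j) = km (adj n A) (adj m B) $$ (i, j)"
    using assms i j b by (simp add: adj_def km_def)
qed (use assms in \<open>auto simp: adj_def\<close>)

lemma dim_adj[simp]: "dim_row (adj n A) = n" "dim_col (adj n A) = n" by (auto simp: adj_def)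

lemma km_one: "km (1\<^sub>m n) (1\<^sub>m m) = 1\<^sub>m (n*m)"
proof (rule eq_matI)
  fix i j assume "i < dim_row (1\<^sub>m (n * m))" "j < dim_col (1\<^sub>m (n * m))"
  hence i: "i < n*m" and j: "j < n*m" by auto
  have "(i = j) = (i div m = j div m \<and> i mod m = j mod m)"
    by (metis div_mult_mod_eq)
  note b = lt_mult_div[OF i] lt_mult_mod[OF i] lt_mult_div[OF j] lt_mult_mod[OF j]
  thus "km (1\<^sub>m n) (1\<^sub>m m) $$ (i, j) = 1\<^sub>m (n * m) $$ (i, j)"
    using i j b by (auto simp: km_def) (metis div_mult_mod_eq)
qed (auto simp: km_def)

lemma unitary_km:
  assumes "mat_unitary n A" "mat_unitary m B"
  shows "mat_unitary (n*m) (km A B)"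
proof -
  have cA: "A \<in> carrier_mat n n" and cB: "B \<in> carrier_mat m m" using assms by (auto simp: mat_unitary_def)
  have 1: "A * adj n A = 1\<^sub>m n" "adj n A * A = 1\<^sub>m n" "B * adj m B = 1\<^sub>m m" "adj m B * B = 1\<^sub>m m"
    using assms by (auto simp: mat_unitary_def adj_def)
  have k: "km A B \<in> carrier_mat (n*m) (n*m)" using cA cB by auto
  have "km A B * adj (n*m) (km A B) = 1\<^sub>m (n*m)"
    unfolding adj_km[OF cA cB] using cA cB by (subst km_mult) (auto simp: 1 km_one)
  moreover have "adj (n*m) (km A B) * km A B = 1\<^sub>m (n*m)"
    unfolding adj_km[OF cA cB] using cA cB by (subst km_mult) (auto simp: 1 km_one)
  ultimately show ?thesis using k unfolding mat_unitary_def adj_def by auto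
qed


lemma mm_run_snoc: "mm_run M (w @ [s]) = mm_step M s (mm_run M w)"
  by (simp add: mm_run_def)

lemma fst_mm_step: "fst (mm_step M s c) = proj_on (qnon M) (trans M s *\<^sub>v fst c)"
  by (cases c) (simp add: mm_step_def Let_def)
lemma snd_mm_step: "fst (snd (mm_step M s c)) = fst (snd c) + proj_sqnorm (qacc M) (trans M s *\<^sub>v fst c)"
  by (cases c) (simp add: mm_step_def Let_def)

lemma valid_carrier: "valid_mmqfa M \<Longrightarrow> trans M s \<in> carrier_mat (qdim M) (qdim M)"
  by (simp add: valid_mmqfa_def mat_unitary_def)

lemma dim_proj_on[simp]: "dim_vec (proj_on S v) = dim_vec v" by (simp add: proj_on_def)

lemma dim_run: "valid_mmqfa M \<Longrightarrow> dim_vec (fst (mm_run M w)) = qdim M"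
proof (induction w rule: rev_induct)
  case Nil thus ?case by (simp add: mm_run_def)
next
  case (snoc s w) thus ?case using valid_carrier[OF snoc.prems, of s]
    by (simp add: mm_run_snoc fst_mm_step)
qed

lemma idx_lt: "i < (a::nat) \<Longrightarrow> j < b \<Longrightarrow> i * b + j < a * b"
proof -
  assume a: "i < a" "j < b"
  have "i * b + j < i * b + b" using a by simp
  also have "\<dots> = Suc i * b" by simp
  also have "\<dots> \<le> a * b" using a by (intro mult_right_mono) auto
  finally show ?thesis .
qed

definition prodq :: "'a mmqfa \<Rightarrow> 'a mmqfa \<Rightarrow> 'a mmqfa" where
  "prodq M N = (| qdim = qdim M * qdim N, trans = (\<lambda>s. km (trans M s) (trans N s)),
     q0 = q0 M * qdim N + q0 N,
     qacc = {k. k < qdim M * qdim N \<and> k div qdim N \<in> qacc M \<and> k mod qdim N \<in> qacc N},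
     qrej = {k. k < qdim M * qdim N \<and> \<not> (k div qdim N \<in> qacc M \<and> k mod qdim N \<in> qacc N)
        \<and> \<not> (k div qdim N \<in> qnon M \<and> k mod qdim N \<in> qnon N)} |)"

lemma prodq_simps[simp]: "qdim (prodq M N) = qdim M * qdim N" "trans (prodq M N) s = km (trans M s) (trans N s)"
  "q0 (prodq M N) = q0 M * qdim N + q0 N"
  by (simp_all add: prodq_def)

lemma qnon_prodq: "k < qdim M * qdim N \<Longrightarrow> k \<in> qnon (prodq M N) \<longleftrightarrow> (k div qdim N \<in> qnon M \<and> k mod qdim N \<in> qnon N)"
  by (auto simp: qnon_def prodq_def)

lemma valid_prodq:
  assumes "valid_mmqfa M" "valid_mmqfa N"
  shows "valid_mmqfa (prodq M N)"
proof -
  have a: "q0 M < qdim M" "q0 N < qdim N" using assms by (auto simp: valid_mmqfa_def)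
  have "q0 M * qdim N + q0 N < qdim M * qdim N"
  proof -
    have "q0 M * qdim N + q0 N < q0 M * qdim N + qdim N" using a by simp
    also have "\<dots> = Suc (q0 M) * qdim N" by simp
    also have "\<dots> \<le> qdim M * qdim N" using a by (intro mult_right_mono) auto
    finally show ?thesis .
  qed
  thus ?thesis using assms unfolding valid_mmqfa_def
    by (auto simp: unitary_km) (auto simp: prodq_def)
qed

lemma proj_on_kv:
  assumes "dim_vec a = qdim M" "dim_vec b = qdim N"
  shows "proj_on (qnon (prodq M N)) (kv a b) = kv (proj_on (qnon M) a) (proj_on (qnon N) b)"
proof (rule eq_vecI)
  fix k assume "k < dim_vec (kv (proj_on (qnon M) a) (proj_on (qnon N) b))"
  hence k: "k < qdim M * qdim N" using assms by simp
  note b = lt_mult_div[OF k] lt_mult_mod[OF k]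
  show "proj_on (qnon (prodq M N)) (kv a b) $ k = kv (proj_on (qnon M) a) (proj_on (qnon N) b) $ k"
    using k b assms by (simp add: proj_on_def kv_def qnon_prodq)
qed (simp add: proj_on_def)

lemma proj_sqnorm_alt: "proj_sqnorm S v = (\<Sum>i\<in>{0..<dim_vec v}. if i \<in> S then (cmod (v $ i))\<^sup>2 else 0)"
  unfolding proj_sqnorm_def by (simp add: sum.inter_restrict)

lemma proj_sqnorm_kv:
  assumes "dim_vec a = qdim M" "dim_vec b = qdim N"
  shows "proj_sqnorm (qacc (prodq M N)) (kv a b) = proj_sqnorm (qacc M) a * proj_sqnorm (qacc N) b"
proof -
  have "proj_sqnorm (qacc (prodq M N)) (kv a b) = (\<Sum>i\<in>{0..<qdim M}. \<Sum>j\<in>{0..<qdim N}.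
      (if i \<in> qacc M then (cmod (a $ i))\<^sup>2 else 0) * (if j \<in> qacc N then (cmod (b $ j))\<^sup>2 else 0))"
    unfolding proj_sqnorm_alt using assms
    apply (simp add: sum_split)
    apply (intro sum.cong refl)
    apply (auto simp: prodq_def kv_def norm_mult power_mult_distrib idx_lt)
    done
  thus ?thesis unfolding proj_sqnorm_alt using assms by (simp add: sum_product)
qed

lemma run_prodq:
  assumes "valid_mmqfa M" "valid_mmqfa N"
  shows "fst (mm_run (prodq M N) (map Some x)) = kv (fst (mm_run M (map Some x))) (fst (mm_run N (map Some x)))"
proof (induction x rule: rev_induct)
  case Nil
  have a: "q0 M < qdim M" "q0 N < qdim N" using assms by (auto simp: valid_mmqfa_def)
  show ?case
  proof (rule eq_vecI)
    fix k assume "k < dim_vec (kv (fst (mm_run M (map Some []))) (fst (mm_run N (map Some []))))"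
    hence k: "k < qdim M * qdim N" by (simp add: mm_run_def)
    have "(k = q0 M * qdim N + q0 N) = (k div qdim N = q0 M \<and> k mod qdim N = q0 N)"
      using a by (metis div_mult_mod_eq divmod_simps mult.commute)
    thus "fst (mm_run (prodq M N) (map Some [])) $ k = kv (fst (mm_run M (map Some []))) (fst (mm_run N (map Some []))) $ k"
      using k lt_mult_div[OF k] lt_mult_mod[OF k] a by (auto simp: mm_run_def kv_def unit_vec_def)
  qed (simp add: mm_run_def)
next
  case (snoc s x)
  have d: "dim_vec (fst (mm_run M (map Some x))) = qdim M" "dim_vec (fst (mm_run N (map Some x))) = qdim N"
    using dim_run assms by auto
  have cM: "trans M (Some s) \<in> carrier_mat (qdim M) (qdim M)" and cN: "trans N (Some s) \<in> carrier_mat (qdim N) (qdim N)"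
    using valid_carrier assms by auto
  show ?case using d cM cN
    by (simp add: mm_run_snoc fst_mm_step snoc.IH km_mult_kv proj_on_kv)
qed


lemma proj_sqnorm_zero_if: "(\<And>i. i < dim_vec v \<Longrightarrow> i \<in> S \<Longrightarrow> v $ i = 0) \<Longrightarrow> proj_sqnorm S v = 0"
  unfolding proj_sqnorm_def by (intro sum.neutral) auto

lemma ed_comp:
  assumes "end_decisive M" "valid_mmqfa M" "i < qdim M" "i \<in> qacc M"
  shows "(trans M (Some s) *\<^sub>v fst (mm_run M (map Some x))) $ i = 0"
proof -
  have e: "proj_on (qacc M) (trans M (Some s) *\<^sub>v fst (mm_run M (map Some x))) = 0\<^sub>v (qdim M)"
    using assms(1) unfolding end_decisive_def by blast
  have "dim_vec (trans M (Some s) *\<^sub>v fst (mm_run M (map Some x))) = qdim M"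
    using valid_carrier[OF assms(2), of "Some s"] by auto
  hence "proj_on (qacc M) (trans M (Some s) *\<^sub>v fst (mm_run M (map Some x))) $ i
     = (trans M (Some s) *\<^sub>v fst (mm_run M (map Some x))) $ i"
    using assms(3,4) by (simp add: proj_on_def)
  thus ?thesis using e assms(3) by simp
qed

lemma pa_zero:
  assumes "end_decisive M" "valid_mmqfa M"
  shows "fst (snd (mm_run M (map Some x))) = 0"
proof (induction x rule: rev_induct)
  case Nil thus ?case by (simp add: mm_run_def)
next
  case (snoc s x)
  have "proj_sqnorm (qacc M) (trans M (Some s) *\<^sub>v fst (mm_run M (map Some x))) = 0"
  proof (rule proj_sqnorm_zero_if)
    fix i assume "i < dim_vec (trans M (Some s) *\<^sub>v fst (mm_run M (map Some x)))" "i \<in> qacc M"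
    moreover have "dim_row (trans M (Some s)) = qdim M" using valid_carrier[OF assms(2), of "Some s"] by auto
    ultimately show "(trans M (Some s) *\<^sub>v fst (mm_run M (map Some x))) $ i = 0"
      using ed_comp[OF assms, of i s x] by simp
  qed
  thus ?case by (simp add: mm_run_snoc snd_mm_step snoc.IH)
qed

lemma acc_ed:
  assumes "end_decisive M" "valid_mmqfa M"
  shows "acc_prob M x = proj_sqnorm (qacc M) (trans M None *\<^sub>v fst (mm_run M (map Some x)))"
  unfolding acc_prob_def by (simp add: mm_run_snoc snd_mm_step pa_zero[OF assms])

lemma ed_prodq:
  assumes "end_decisive M" "valid_mmqfa M" "valid_mmqfa N"
  shows "end_decisive (prodq M N)"
  unfolding end_decisive_def
proof (intro allI)
  fix x s
  let ?a = "fst (mm_run M (map Some x))" and ?b = "fst (mm_run N (map Some x))"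
  have d: "dim_vec ?a = qdim M" "dim_vec ?b = qdim N" using dim_run assms by auto
  have cM: "trans M (Some s) \<in> carrier_mat (qdim M) (qdim M)" and cN: "trans N (Some s) \<in> carrier_mat (qdim N) (qdim N)"
    using valid_carrier assms by auto
  have r: "trans (prodq M N) (Some s) *\<^sub>v fst (mm_run (prodq M N) (map Some x)) =
     kv (trans M (Some s) *\<^sub>v ?a) (trans N (Some s) *\<^sub>v ?b)"
    using d cM cN by (simp add: run_prodq[OF assms(2,3)] km_mult_kv)
  show "proj_on (qacc (prodq M N)) (trans (prodq M N) (Some s) *\<^sub>v fst (mm_run (prodq M N) (map Some x))) =
       0\<^sub>v (qdim (prodq M N))"
    unfolding r
  proof (rule eq_vecI)
    fix k assume "k < dim_vec (0\<^sub>v (qdim (prodq M N)) :: complex vec)"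
    hence k: "k < qdim M * qdim N" by simp
    note b = lt_mult_div[OF k] lt_mult_mod[OF k]
    show "proj_on (qacc (prodq M N)) (kv (trans M (Some s) *\<^sub>v ?a) (trans N (Some s) *\<^sub>v ?b)) $ k =
         0\<^sub>v (qdim (prodq M N)) $ k"
      using k b cM cN ed_comp[OF assms(1,2) b(1), of s x]
      by (auto simp: proj_on_def kv_def prodq_def)
  qed (use cM cN in simp)
qed

lemma acc_prodq:
  assumes "end_decisive M" "valid_mmqfa M" "end_decisive N" "valid_mmqfa N"
  shows "acc_prob (prodq M N) x = acc_prob M x * acc_prob N x"
proof -
  let ?a = "fst (mm_run M (map Some x))" and ?b = "fst (mm_run N (map Some x))"
  have d: "dim_vec ?a = qdim M" "dim_vec ?b = qdim N" using dim_run assms by auto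
  have cM: "trans M None \<in> carrier_mat (qdim M) (qdim M)" and cN: "trans N None \<in> carrier_mat (qdim N) (qdim N)"
    using valid_carrier assms by auto
  have "acc_prob (prodq M N) x = proj_sqnorm (qacc (prodq M N)) (kv (trans M None *\<^sub>v ?a) (trans N None *\<^sub>v ?b))"
    using d cM cN by (simp add: acc_ed[OF ed_prodq[OF assms(1,2,4)] valid_prodq[OF assms(2,4)]]
        run_prodq[OF assms(2,4)] km_mult_kv)
  also have "\<dots> = acc_prob M x * acc_prob N x"
    using cM cN by (simp add: proj_sqnorm_kv acc_ed assms)
  finally show ?thesis .
qed

definition powq :: "'a mmqfa \<Rightarrow> nat \<Rightarrow> 'a mmqfa \<Rightarrow> 'a mmqfa" where
  "powq M k N = (prodq M ^^ k) N"

lemma powq_props: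
  assumes "end_decisive M" "valid_mmqfa M" "end_decisive N" "valid_mmqfa N"
  shows "valid_mmqfa (powq M k N) \<and> end_decisive (powq M k N) \<and>
     (\<forall>x. acc_prob (powq M k N) x = acc_prob M x ^ k * acc_prob N x)"
proof (induction k)
  case 0 thus ?case using assms by (simp add: powq_def)
next
  case (Suc k)
  have e: "powq M (Suc k) N = prodq M (powq M k N)" by (simp add: powq_def)
  show ?case unfolding e using Suc assms
    by (simp add: valid_prodq ed_prodq acc_prodq)
qed


definition nrm :: "complex vec \<Rightarrow> real" where
  "nrm v = (\<Sum>i\<in>{0..<dim_vec v}. (cmod (v $ i))\<^sup>2)"

lemma proj_sqnorm_le: "proj_sqnorm S v \<le> nrm v"
  unfolding proj_sqnorm_def nrm_def by (intro sum_mono2) auto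

lemma proj_sqnorm_nonneg: "proj_sqnorm S v \<ge> 0"
  unfolding proj_sqnorm_def by (intro sum_nonneg) auto

lemma nrm_proj_on: "nrm (proj_on S v) \<le> nrm v"
  unfolding nrm_def proj_on_def by simp (rule sum_mono, auto)

lemma nrm_complex: "complex_of_real (nrm w) = (\<Sum>i\<in>{0..<dim_vec w}. w $ i * cnj (w $ i))"
  unfolding nrm_def of_real_sum by (intro sum.cong refl) (rule complex_norm_square)

lemma nrm_unitary:
  assumes "mat_unitary n U" "dim_vec v = n"
  shows "nrm (U *\<^sub>v v) = nrm v"
proof -
  have c: "U \<in> carrier_mat n n" and u: "adj n U * U = 1\<^sub>m n"
    using assms by (auto simp: mat_unitary_def adj_def)
  have delta: "(\<Sum>i\<in>{0..<n}. cnj (U $$ (i,l)) * U $$ (i,j)) = (if l = j then 1 else 0)"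
    if "l < n" "j < n" for l j
  proof -
    have "(adj n U * U) $$ (l, j) = (\<Sum>i\<in>{0..<n}. cnj (U $$ (i,l)) * U $$ (i,j))"
      using that c by (simp add: adj_def scalar_prod_def)
    thus ?thesis using u that by simp
  qed
  have "complex_of_real (nrm (U *\<^sub>v v)) = (\<Sum>i\<in>{0..<n}. (U *\<^sub>v v) $ i * cnj ((U *\<^sub>v v) $ i))"
    using c by (simp only: nrm_complex) simp
  also have "\<dots> = (\<Sum>i\<in>{0..<n}. (\<Sum>j\<in>{0..<n}. U $$ (i,j) * v $ j) * (\<Sum>l\<in>{0..<n}. cnj (U $$ (i,l)) * cnj (v $ l)))"
    using c assms(2) by (intro sum.cong refl) (simp add: scalar_prod_def cnj_sum)
  also have "\<dots> = (\<Sum>i\<in>{0..<n}. \<Sum>j\<in>{0..<n}. \<Sum>l\<in>{0..<n}. (v $ j * cnj (v $ l)) * (cnj (U $$ (i,l)) * U $$ (i,j)))"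
    by (simp add: sum_product mult_ac)
  also have "\<dots> = (\<Sum>j\<in>{0..<n}. \<Sum>l\<in>{0..<n}. \<Sum>i\<in>{0..<n}. (v $ j * cnj (v $ l)) * (cnj (U $$ (i,l)) * U $$ (i,j)))"
    by (subst sum.swap, rule sum.cong[OF refl], rule sum.swap)
  also have "\<dots> = (\<Sum>j\<in>{0..<n}. \<Sum>l\<in>{0..<n}. (v $ j * cnj (v $ l)) * (if l = j then 1 else 0))"
    by (intro sum.cong refl) (simp add: sum_distrib_left[symmetric] delta)
  also have "\<dots> = (\<Sum>j\<in>{0..<n}. v $ j * cnj (v $ j))"
    by (simp add: if_distrib cong: if_cong)
  also have "\<dots> = complex_of_real (nrm v)"
    using assms(2) by (simp only: nrm_complex)
  finally show ?thesis by (simp only: of_real_eq_iff)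
qed

lemma nrm_run: "valid_mmqfa M \<Longrightarrow> nrm (fst (mm_run M w)) \<le> 1"
proof (induction w rule: rev_induct)
  case Nil
  hence q: "q0 M < qdim M" by (simp add: valid_mmqfa_def)
  have "nrm (unit_vec (qdim M) (q0 M)) = (\<Sum>i\<in>{0..<qdim M}. if i = q0 M then 1 else 0)"
    unfolding nrm_def by (intro sum.cong refl) (auto simp: unit_vec_def)
  also have "\<dots> = 1" using q by simp
  finally show ?case by (simp add: mm_run_def)
next
  case (snoc s w)
  have u: "mat_unitary (qdim M) (trans M s)" using snoc.prems by (simp add: valid_mmqfa_def)
  have "nrm (fst (mm_run M (w @ [s]))) \<le> nrm (trans M s *\<^sub>v fst (mm_run M w))"
    by (simp add: mm_run_snoc fst_mm_step nrm_proj_on)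
  also have "\<dots> = nrm (fst (mm_run M w))" using nrm_unitary[OF u dim_run[OF snoc.prems]] .
  finally show ?case using snoc by simp
qed

lemma acc_bounds:
  assumes "end_decisive M" "valid_mmqfa M"
  shows "0 \<le> acc_prob M x" "acc_prob M x \<le> 1"
proof -
  have u: "mat_unitary (qdim M) (trans M None)" using assms by (simp add: valid_mmqfa_def)
  show "0 \<le> acc_prob M x" by (simp add: acc_ed[OF assms] proj_sqnorm_nonneg)
  have "acc_prob M x \<le> nrm (trans M None *\<^sub>v fst (mm_run M (map Some x)))"
    by (simp add: acc_ed[OF assms] proj_sqnorm_le)
  also have "\<dots> \<le> 1" using nrm_unitary[OF u dim_run[OF assms(2)]] nrm_run[OF assms(2)] by simp
  finally show "acc_prob M x \<le> 1" .
qed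


theorem lemma4p14:
  fixes M M' :: "('a::finite) mmqfa" and L L' :: "'a list set"
  assumes "valid_mmqfa M" and "end_decisive M" and "accepts_bounded_error M L"
    and "valid_mmqfa M'" and "end_decisive M'" and "accepts_one_sided M' L'"
  shows "\<exists>M'' :: 'a mmqfa. valid_mmqfa M'' \<and> accepts_bounded_error M'' (L \<inter> L')"
proof -
  obtain thr e where e: "e > 0" and thr: "\<And>x. (x \<in> L \<longrightarrow> acc_prob M x > thr + e) \<and> (x \<notin> L \<longrightarrow> acc_prob M x < thr - e)"
    using assms(3) unfolding accepts_bounded_error_def by blast
  obtain c where c: "c > 0" and cc: "\<And>x. (x \<in> L' \<longrightarrow> acc_prob M' x > c) \<and> (x \<notin> L' \<longrightarrow> acc_prob M' x = 0)"
    using assms(6) unfolding accepts_one_sided_def by blast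
  note b = acc_bounds[OF assms(2,1)] acc_bounds[OF assms(5,4)]
  show ?thesis
  proof (cases "\<forall>x. x \<in> L")
    case True
    have "accepts_bounded_error M' (L \<inter> L')"
      unfolding accepts_bounded_error_def
    proof (rule exI[of _ "c/2"], rule exI[of _ "c/4"], rule conjI[OF _ allI])
      show "c/4 > 0" using c by simp
      fix x
      have "x \<in> L' \<longrightarrow> acc_prob M' x > c" "x \<notin> L' \<longrightarrow> acc_prob M' x = 0" using cc[of x] by auto
      thus "(x \<in> L \<inter> L' \<longrightarrow> c / 2 + c / 4 < acc_prob M' x) \<and> (x \<notin> L \<inter> L' \<longrightarrow> acc_prob M' x < c / 2 - c / 4)"
        using c True by auto
    qed
    thus ?thesis using assms(4) by blast
  next
    case False
    then obtain x0 where x0: "x0 \<notin> L" by blast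
    define lo where "lo = thr - e"
    define hi where "hi = thr + e"
    have lo0: "lo > 0" using thr[of x0] x0 b(1)[of x0] unfolding lo_def by linarith
    have hl: "lo < hi" using e unfolding lo_def hi_def by simp
    have hi0: "hi > 0" using lo0 hl by simp
    have r: "lo / hi < 1" using hl hi0 by simp
    obtain n where n: "(lo / hi) ^ n < c" using real_arch_pow_inv[OF c r] by blast
    define k where "k = Suc n"
    have "(lo / hi) ^ k \<le> (lo / hi) ^ n" unfolding k_def
      using lo0 hi0 r by (intro power_decreasing) auto
    hence "(lo/hi)^k < c" using n by simp
    hence lk: "lo ^ k < c * hi ^ k" using hi0 by (simp add: power_divide divide_less_eq)
    obtain P where vP: "valid_mmqfa P" and aP: "\<And>x. acc_prob P x = acc_prob M x ^ k * acc_prob M' x"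
      using powq_props[OF assms(2,1,5,4), of k] by blast
    have "accepts_bounded_error P (L \<inter> L')"
      unfolding accepts_bounded_error_def
    proof (intro exI conjI allI)
      show "(c * hi ^ k - lo ^ k) / 2 > 0" using lk by simp
      fix x
      show "x \<in> L \<inter> L' \<longrightarrow> (lo ^ k + c * hi ^ k) / 2 + (c * hi ^ k - lo ^ k) / 2 < acc_prob P x"
      proof
        assume x: "x \<in> L \<inter> L'"
        have p: "acc_prob M x > hi" using thr[of x] x unfolding hi_def by auto
        have p': "acc_prob M' x > c" using cc[of x] x by auto
        have "hi ^ k < acc_prob M x ^ k" using p hi0 k_def by (intro power_strict_mono) auto
        hence "c * hi ^ k < acc_prob M x ^ k * acc_prob M' x" using p' c hi0
          by (smt (verit, ccfv_SIG) mult_strict_mono mult.commute zero_less_power)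
        thus "(lo ^ k + c * hi ^ k) / 2 + (c * hi ^ k - lo ^ k) / 2 < acc_prob P x" by (simp add: aP field_simps)
      qed
      show "x \<notin> L \<inter> L' \<longrightarrow> acc_prob P x < (lo ^ k + c * hi ^ k) / 2 - (c * hi ^ k - lo ^ k) / 2"
      proof
        assume x: "x \<notin> L \<inter> L'"
        show "acc_prob P x < (lo ^ k + c * hi ^ k) / 2 - (c * hi ^ k - lo ^ k) / 2"
        proof (cases "x \<in> L")
          case True
          hence "acc_prob M' x = 0" using x cc[of x] by auto
          thus ?thesis using lo0 by (simp add: aP)
        next
          case False
          have p: "acc_prob M x < lo" using thr[of x] False unfolding lo_def by auto
          have "acc_prob M x ^ k < lo ^ k" using p b(1)[of x] k_def by (intro power_strict_mono) auto
          moreover have "acc_prob M x ^ k * acc_prob M' x \<le> acc_prob M x ^ k"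
            using b(1)[of x] b(3)[of x] b(4)[of x] by (simp add: mult_left_le)
          ultimately show ?thesis by (simp add: aP field_simps)
        qed
      qed
    qed
    thus ?thesis using vP by blast
  qed
qed

end
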